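(* Let $L$ be a Stonean locale and $\nu:L\to\mathbb{R}$ a real normal valuation. Let $\nu_+$ (resp. $\nu_-$) be the supremum of all $a\in L$ such that $\nu$ (resp. $-\nu$) restricted to $\{b\in L:b\le a\}$ takes only nonnegative values. Then: an element $a\in L$ satisfies this condition for $\nu$ (resp. $-\nu$) if and only if $a\le\nu_+$ (resp. $a\le\nu_-$); $\nu_+\vee\nu_-=1$; $\nu_+\wedge\nu_-$ is the largest $a\in L$ such that $\nu$ vanishes on $\{b:b\le a\}$; and the maps $\nu^+(x)=\nu(\nu_+\wedge x)$ and $\nu^-(x)=-\nu(\nu_-\wedge x)$ are positive normal valuations on $L$ with $\nu=\nu^+-\nu^-$. The same statements hold when $\nu:L\to\mathbb{R}$ is a real continuous valuation on a Boolean locale $L$ (a complete Boolean algebra).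
   Context: Frames/locales: a frame is a poset with finite meets and arbitrary joins with binary meets distributing over joins; $\neg x=\sup\{w:w\wedge x=0\}$. Compact open: $a$ with $\bigvee S\ge a\Rightarrow\bigvee F\ge a$ for some finite $F\subset S$. A Stonean locale is coherent (compact opens closed under finite meets including $1$, every element a join of compact opens), regular ($y=\bigvee\{x:\neg x\vee y=1\}$), and extremally disconnected ($\neg x\vee\neg\neg x=1$). A real valuation is $\nu:L\to\mathbb{R}$ with $\nu(0)=0$ and $\nu(x)+\nu(y)=\nu(x\vee y)+\nu(x\wedge y)$; it is continuous if $\nu(\sup I)=\lim_{x\in I}\nu(x)$ for every directed $I$; normal if in addition $\nu(\neg\neg a)=\nu(a)$. A positive valuation takes values in $[0,\infty)$ (and is monotone). *)

theory Defs
  imports Complex_Main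
begin

definition is_frame :: "'a::complete_lattice itself \<Rightarrow> bool" where
  "is_frame _ \<longleftrightarrow> (\<forall>(x::'a) S. inf x (Sup S) = Sup ((inf x) ` S))"

definition pneg :: "'a::complete_lattice \<Rightarrow> 'a" where
  "pneg x = Sup {w. inf w x = bot}"

definition compact_el :: "'a::complete_lattice \<Rightarrow> bool" where
  "compact_el a \<longleftrightarrow> (\<forall>S. a \<le> Sup S \<longrightarrow> (\<exists>F. finite F \<and> F \<subseteq> S \<and> a \<le> Sup F))"

definition coherent :: "'a::complete_lattice itself \<Rightarrow> bool" where
  "coherent _ \<longleftrightarrow> compact_el (top::'a)
     \<and> (\<forall>a b::'a. compact_el a \<longrightarrow> compact_el b \<longrightarrow> compact_el (inf a b))
     \<and> (\<forall>y::'a. y = Sup {x. compact_el x \<and> x \<le> y})"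

definition regular :: "'a::complete_lattice itself \<Rightarrow> bool" where
  "regular _ \<longleftrightarrow> (\<forall>y::'a. y = Sup {x. sup (pneg x) y = top})"

definition extremally_disconnected :: "'a::complete_lattice itself \<Rightarrow> bool" where
  "extremally_disconnected _ \<longleftrightarrow> (\<forall>x::'a. sup (pneg x) (pneg (pneg x)) = top)"

definition stonean :: "'a::complete_lattice itself \<Rightarrow> bool" where
  "stonean T \<longleftrightarrow> is_frame T \<and> coherent T \<and> regular T \<and> extremally_disconnected T"

definition boolean_locale :: "'a::complete_lattice itself \<Rightarrow> bool" where
  "boolean_locale T \<longleftrightarrow> is_frame T \<and> (\<forall>x::'a. sup x (pneg x) = top)"

definition valuation :: "('a::complete_lattice \<Rightarrow> real) \<Rightarrow> bool" where
  "valuation \<nu> \<longleftrightarrow> \<nu> bot = 0 \<and> (\<forall>x y. \<nu> x + \<nu> y = \<nu> (sup x y) + \<nu> (inf x y))"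

definition directed :: "'a::complete_lattice set \<Rightarrow> bool" where
  "directed I \<longleftrightarrow> I \<noteq> {} \<and> (\<forall>x\<in>I. \<forall>y\<in>I. \<exists>z\<in>I. x \<le> z \<and> y \<le> z)"

definition net_tendsto :: "('a::complete_lattice \<Rightarrow> real) \<Rightarrow> 'a set \<Rightarrow> real \<Rightarrow> bool" where
  "net_tendsto \<nu> I l \<longleftrightarrow> (\<forall>e>0. \<exists>x\<in>I. \<forall>y\<in>I. x \<le> y \<longrightarrow> \<bar>\<nu> y - l\<bar> < e)"

definition continuous_valuation :: "('a::complete_lattice \<Rightarrow> real) \<Rightarrow> bool" where
  "continuous_valuation \<nu> \<longleftrightarrow> valuation \<nu> \<and>
     (\<forall>I. directed I \<longrightarrow> net_tendsto \<nu> I (\<nu> (Sup I)))"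

definition normal_valuation :: "('a::complete_lattice \<Rightarrow> real) \<Rightarrow> bool" where
  "normal_valuation \<nu> \<longleftrightarrow> continuous_valuation \<nu> \<and> (\<forall>a. \<nu> (pneg (pneg a)) = \<nu> a)"

definition positive_valuation :: "('a::complete_lattice \<Rightarrow> real) \<Rightarrow> bool" where
  "positive_valuation \<nu> \<longleftrightarrow> valuation \<nu> \<and> (\<forall>x. 0 \<le> \<nu> x) \<and> mono \<nu>"

definition nonneg_below :: "('a::complete_lattice \<Rightarrow> real) \<Rightarrow> 'a \<Rightarrow> bool" where
  "nonneg_below \<nu> a \<longleftrightarrow> (\<forall>b\<le>a. 0 \<le> \<nu> b)"

definition vanish_below :: "('a::complete_lattice \<Rightarrow> real) \<Rightarrow> 'a \<Rightarrow> bool" where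
  "vanish_below \<nu> a \<longleftrightarrow> (\<forall>b\<le>a. \<nu> b = 0)"

definition pos_part_el :: "('a::complete_lattice \<Rightarrow> real) \<Rightarrow> 'a" where
  "pos_part_el \<nu> = Sup {a. nonneg_below \<nu> a}"

definition neg_part_el :: "('a::complete_lattice \<Rightarrow> real) \<Rightarrow> 'a" where
  "neg_part_el \<nu> = Sup {a. nonneg_below (\<lambda>x. - \<nu> x) a}"

definition hahn_conclusions :: "('a::complete_lattice \<Rightarrow> real) \<Rightarrow> bool" where
  "hahn_conclusions \<nu> \<longleftrightarrow>
     (\<forall>a. nonneg_below \<nu> a \<longleftrightarrow> a \<le> pos_part_el \<nu>)
   \<and> (\<forall>a. nonneg_below (\<lambda>x. - \<nu> x) a \<longleftrightarrow> a \<le> neg_part_el \<nu>)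
   \<and> sup (pos_part_el \<nu>) (neg_part_el \<nu>) = top
   \<and> vanish_below \<nu> (inf (pos_part_el \<nu>) (neg_part_el \<nu>))
   \<and> (\<forall>a. vanish_below \<nu> a \<longrightarrow> a \<le> inf (pos_part_el \<nu>) (neg_part_el \<nu>))
   \<and> positive_valuation (\<lambda>x. \<nu> (inf (pos_part_el \<nu>) x))
   \<and> normal_valuation (\<lambda>x. \<nu> (inf (pos_part_el \<nu>) x))
   \<and> positive_valuation (\<lambda>x. - \<nu> (inf (neg_part_el \<nu>) x))
   \<and> normal_valuation (\<lambda>x. - \<nu> (inf (neg_part_el \<nu>) x))
   \<and> (\<forall>x. \<nu> x = \<nu> (inf (pos_part_el \<nu>) x) - (- \<nu> (inf (neg_part_el \<nu>) x)))"

end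

theory Submission
  imports Defs
begin

lemma frame_dist:
  assumes "is_frame TYPE('a::complete_lattice)"
  shows "inf (x::'a) (Sup S) = Sup ((inf x) ` S)"
  using assms unfolding is_frame_def by blast

lemma frame_dist2:
  assumes "is_frame TYPE('a::complete_lattice)"
  shows "inf (x::'a) (sup a b) = sup (inf x a) (inf x b)"
proof -
  have "inf x (sup a b) = inf x (Sup {a, b})" by simp
  also have "\<dots> = Sup (inf x ` {a, b})" by (rule frame_dist[OF assms])
  finally show ?thesis by simp
qed

lemma pneg_inf:
  assumes "is_frame TYPE('a::complete_lattice)"
  shows "inf (pneg (x::'a)) x = bot"
proof -
  have "inf x (pneg x) = Sup ((inf x) ` {w. inf w x = bot})"
    unfolding pneg_def by (rule frame_dist[OF assms])
  also have "\<dots> = bot" by (auto simp: inf_commute intro!: Sup_bot_conv(2)[THEN iffD2])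
  finally show ?thesis by (simp add: inf_commute)
qed

lemma le_pneg:
  assumes "is_frame TYPE('a::complete_lattice)"
  shows "(w::'a) \<le> pneg x \<longleftrightarrow> inf w x = bot"
proof
  assume "w \<le> pneg x"
  then have "inf w x \<le> inf (pneg x) x" by (intro inf_mono) auto
  then show "inf w x = bot" using pneg_inf[OF assms] by (simp add: bot_unique)
next
  assume "inf w x = bot"
  then show "w \<le> pneg x" unfolding pneg_def by (auto intro: Sup_upper)
qed

lemma pneg_anti:
  assumes "is_frame TYPE('a::complete_lattice)" "(x::'a) \<le> y"
  shows "pneg y \<le> pneg x"
proof -
  have "inf (pneg y) x \<le> inf (pneg y) y" using assms(2) by (intro inf_mono) auto
  then show ?thesis using pneg_inf[OF assms(1), of y] le_pneg[OF assms(1)] by (simp add: bot_unique)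
qed

lemma le_pneg_pneg:
  assumes "is_frame TYPE('a::complete_lattice)"
  shows "(x::'a) \<le> pneg (pneg x)"
  using le_pneg[OF assms] pneg_inf[OF assms, of x] by (simp add: inf_commute)

lemma inf_pneg_self:
  assumes "is_frame TYPE('a::complete_lattice)"
  shows "inf (x::'a) (pneg x) = bot"
  using pneg_inf[OF assms, of x] by (simp add: inf_commute)

lemma pneg3:
  assumes "is_frame TYPE('a::complete_lattice)"
  shows "pneg (pneg (pneg (x::'a))) = pneg x"
  by (rule antisym) (auto intro: pneg_anti[OF assms] le_pneg_pneg[OF assms])

lemma directed_inf_image:
  assumes "directed I"
  shows "directed (inf c ` I)"
  unfolding directed_def
proof (intro conjI ballI)
  show "inf c ` I \<noteq> {}" using assms unfolding directed_def by auto
next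
  fix x y assume "x \<in> inf c ` I" "y \<in> inf c ` I"
  then obtain x0 y0 where "x0 \<in> I" "y0 \<in> I" "x = inf c x0" "y = inf c y0" by auto
  moreover obtain z where "z \<in> I" "x0 \<le> z" "y0 \<le> z"
    using assms \<open>x0 \<in> I\<close> \<open>y0 \<in> I\<close> unfolding directed_def by blast
  ultimately show "\<exists>z\<in>inf c ` I. x \<le> z \<and> y \<le> z"
    by (intro bexI[of _ "inf c z"]) (auto intro: le_infI2)
qed

lemma net_nonneg:
  assumes "net_tendsto f I l" "\<forall>x\<in>I. 0 \<le> f x"
  shows "0 \<le> (l::real)"
proof (rule ccontr)
  assume "\<not> 0 \<le> l"
  then have "-l > 0" by simp
  then obtain x where "x \<in> I" "\<forall>y\<in>I. x \<le> y \<longrightarrow> \<bar>f y - l\<bar> < -l"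
    using assms(1) unfolding net_tendsto_def by blast
  then have "\<bar>f x - l\<bar> < -l" by auto
  then show False using assms(2) \<open>x \<in> I\<close> by auto
qed

locale hahn =
  fixes \<nu> :: "'a::complete_lattice \<Rightarrow> real"
  assumes frame: "is_frame TYPE('a)"
    and ed: "extremally_disconnected TYPE('a)"
    and cv: "continuous_valuation \<nu>"
    and K: "\<And>c a. \<nu> c = \<nu> (inf c a) + \<nu> (inf c (pneg a))"
begin

lemma bot0: "\<nu> bot = 0"
  using cv unfolding continuous_valuation_def valuation_def by simp

lemma modular: "\<nu> x + \<nu> y = \<nu> (sup x y) + \<nu> (inf x y)"
  using cv unfolding continuous_valuation_def valuation_def by simp

lemma disj: "inf x y = bot \<Longrightarrow> \<nu> (sup x y) = \<nu> x + \<nu> y"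
  using modular[of x y] bot0 by simp

lemma cont: "directed I \<Longrightarrow> net_tendsto \<nu> I (\<nu> (Sup I))"
  using cv unfolding continuous_valuation_def by simp

lemma nonneg_bot: "nonneg_below \<nu> bot"
  unfolding nonneg_below_def using bot0 by (simp add: bot_unique)

lemma nonneg_sup:
  assumes "nonneg_below \<nu> a" "nonneg_below \<nu> b"
  shows "nonneg_below \<nu> (sup a b)"
  unfolding nonneg_below_def
proof (intro allI impI)
  fix c assume c: "c \<le> sup a b"
  have 1: "0 \<le> \<nu> (inf c a)" using assms(1) unfolding nonneg_below_def by simp
  have "inf c (pneg a) \<le> inf (pneg a) (sup a b)" using c by (simp add: le_infI1 le_infI2)
  also have "\<dots> = sup (inf (pneg a) a) (inf (pneg a) b)" by (rule frame_dist2[OF frame])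
  also have "\<dots> \<le> b" using pneg_inf[OF frame, of a] by simp
  finally have "0 \<le> \<nu> (inf c (pneg a))" using assms(2) unfolding nonneg_below_def by simp
  then show "0 \<le> \<nu> c" using K[of c a] 1 by linarith
qed

lemma nonneg_directed:
  assumes "directed S" "\<forall>s\<in>S. nonneg_below \<nu> s"
  shows "nonneg_below \<nu> (Sup S)"
  unfolding nonneg_below_def
proof (intro allI impI)
  fix c assume c: "c \<le> Sup S"
  have ceq: "c = Sup (inf c ` S)" using frame_dist[OF frame, of c S] c by (simp add: inf_absorb1)
  have "net_tendsto \<nu> (inf c ` S) (\<nu> (Sup (inf c ` S)))"
    by (rule cont[OF directed_inf_image[OF assms(1)]])
  moreover have "\<forall>x\<in>inf c ` S. 0 \<le> \<nu> x" using assms(2) unfolding nonneg_below_def by auto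
  ultimately have "0 \<le> \<nu> (Sup (inf c ` S))" by (rule net_nonneg)
  then show "0 \<le> \<nu> c" using ceq by simp
qed

lemma nonneg_finite:
  assumes "finite F" "\<forall>s\<in>F. nonneg_below \<nu> s"
  shows "nonneg_below \<nu> (Sup F)"
  using assms by (induction F rule: finite_induct) (auto simp: nonneg_bot intro: nonneg_sup)

lemma nonneg_Sup:
  assumes "\<forall>s\<in>S. nonneg_below \<nu> s"
  shows "nonneg_below \<nu> (Sup S)"
proof -
  define D where "D = Sup ` {F. finite F \<and> F \<subseteq> S}"
  have dir: "directed D" unfolding directed_def D_def
  proof (intro conjI ballI)
    show "Sup ` {F. finite F \<and> F \<subseteq> S} \<noteq> {}" by auto
  next
    fix x y assume "x \<in> Sup ` {F. finite F \<and> F \<subseteq> S}" "y \<in> Sup ` {F. finite F \<and> F \<subseteq> S}"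
    then obtain F G where "finite F" "F \<subseteq> S" "x = Sup F" "finite G" "G \<subseteq> S" "y = Sup G" by auto
    then show "\<exists>z\<in>Sup ` {F. finite F \<and> F \<subseteq> S}. x \<le> z \<and> y \<le> z"
    proof (intro bexI[of _ "Sup (F \<union> G)"])
      show "x \<le> Sup (F \<union> G) \<and> y \<le> Sup (F \<union> G)"
        using \<open>x = Sup F\<close> \<open>y = Sup G\<close> by (auto intro: Sup_subset_mono)
      show "Sup (F \<union> G) \<in> Sup ` {F. finite F \<and> F \<subseteq> S}"
        using \<open>finite F\<close> \<open>finite G\<close> \<open>F \<subseteq> S\<close> \<open>G \<subseteq> S\<close> by blast
    qed
  qed
  have nn: "\<forall>s\<in>D. nonneg_below \<nu> s"
  proof
    fix s assume "s \<in> D"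
    then obtain F where F: "finite F" "F \<subseteq> S" "s = Sup F" unfolding D_def by auto
    have "\<forall>t\<in>F. nonneg_below \<nu> t" using F(2) assms by auto
    then show "nonneg_below \<nu> s" using nonneg_finite[OF F(1)] F(3) by simp
  qed
  have "Sup D = Sup S"
  proof (rule antisym)
    show "Sup D \<le> Sup S" unfolding D_def
      by (rule Sup_least) (auto intro: Sup_subset_mono)
    show "Sup S \<le> Sup D"
    proof (rule Sup_least)
      fix s assume "s \<in> S"
      then have "Sup {s} \<in> D" unfolding D_def by blast
      then show "s \<le> Sup D" by (metis Sup_upper ccpo_Sup_singleton)
    qed
  qed
  then show ?thesis using nonneg_directed[OF dir nn] by simp
qed

lemma pos_nonneg: "nonneg_below \<nu> (pos_part_el \<nu>)"
  unfolding pos_part_el_def by (rule nonneg_Sup) simp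

lemma nonneg_iff: "nonneg_below \<nu> a \<longleftrightarrow> a \<le> pos_part_el \<nu>"
proof
  assume "nonneg_below \<nu> a"
  then show "a \<le> pos_part_el \<nu>" unfolding pos_part_el_def by (rule Sup_upper[OF CollectI])
next
  assume "a \<le> pos_part_el \<nu>"
  then show "nonneg_below \<nu> a" using pos_nonneg unfolding nonneg_below_def by auto
qed

lemma nonneg_pneg_pneg:
  assumes "nonneg_below \<nu> a"
  shows "nonneg_below \<nu> (pneg (pneg a))"
  unfolding nonneg_below_def
proof (intro allI impI)
  fix d assume d: "d \<le> pneg (pneg a)"
  have "inf d (pneg a) \<le> inf (pneg (pneg a)) (pneg a)" using d by (simp add: le_infI1)
  then have "inf d (pneg a) = bot" using pneg_inf[OF frame, of "pneg a"] by (simp add: bot_unique)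
  then have "\<nu> d = \<nu> (inf d a)" using K[of d a] bot0 by simp
  then show "0 \<le> \<nu> d" using assms unfolding nonneg_below_def by simp
qed

lemma neg_hahn: "hahn (\<lambda>x. - \<nu> x)"
proof
  show "is_frame TYPE('a)" by (rule frame)
  show "extremally_disconnected TYPE('a)" by (rule ed)
  show "continuous_valuation (\<lambda>x. - \<nu> x)"
  proof -
    have v: "valuation (\<lambda>x. - \<nu> x)"
      using modular bot0 unfolding valuation_def by (simp add: algebra_simps)
    have "net_tendsto (\<lambda>x. - \<nu> x) I (- \<nu> (Sup I))" if "directed I" for I
    proof -
      have "net_tendsto \<nu> I (\<nu> (Sup I))" using cont that .
      moreover have "\<bar>- \<nu> y - - \<nu> (Sup I)\<bar> = \<bar>\<nu> y - \<nu> (Sup I)\<bar>" for y by linarith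
      ultimately show ?thesis unfolding net_tendsto_def by simp
    qed
    then show ?thesis using v unfolding continuous_valuation_def by simp
  qed
  show "- \<nu> c = - \<nu> (inf c a) + - \<nu> (inf c (pneg a))" for c a using K[of c a] by simp
qed

lemma hahn_pos: "nonneg_below \<nu> (pneg (neg_part_el \<nu>))"
  unfolding nonneg_below_def
proof (intro allI impI)
  fix b assume b: "b \<le> pneg (neg_part_el \<nu>)"
  show "0 \<le> \<nu> b"
  proof (rule ccontr)
    assume bneg: "\<not> 0 \<le> \<nu> b"
    let ?U = "{u. u \<le> b \<and> 0 \<le> \<nu> u}"
    have po: "partial_order_on ?U (relation_of (\<le>) ?U)"
      by (rule partial_order_on_relation_ofI) auto
    have "\<exists>m\<in>?U. \<forall>a\<in>?U. m \<le> a \<longrightarrow> a = m"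
    proof (rule predicate_Zorn[OF po])
      fix C assume "C \<in> Chains (relation_of (\<le>) ?U)"
      then have Csub: "C \<subseteq> ?U" and ch: "\<forall>x\<in>C. \<forall>y\<in>C. x \<le> y \<or> y \<le> x"
        unfolding Chains_def relation_of_def by auto
      show "\<exists>u\<in>?U. \<forall>a\<in>C. a \<le> u"
      proof (cases "C = {}")
        case True
        then show ?thesis by (intro bexI[of _ bot]) (auto simp: bot0)
      next
        case False
        have dir: "directed C" unfolding directed_def
        proof (intro conjI ballI)
          show "C \<noteq> {}" by (rule False)
          fix x y assume "x \<in> C" "y \<in> C"
          then show "\<exists>z\<in>C. x \<le> z \<and> y \<le> z" using ch by blast
        qed
        have "0 \<le> \<nu> (Sup C)" by (rule net_nonneg[OF cont[OF dir]]) (use Csub in auto)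
        moreover have "Sup C \<le> b" using Csub by (auto intro: Sup_least)
        ultimately show ?thesis by (intro bexI[of _ "Sup C"]) (auto intro: Sup_upper)
      qed
    qed
    then obtain u where u: "u \<le> b" "0 \<le> \<nu> u"
      and max: "\<And>a. a \<le> b \<Longrightarrow> 0 \<le> \<nu> a \<Longrightarrow> u \<le> a \<Longrightarrow> a = u" by auto
    define c where "c = inf b (pneg u)"
    have "\<nu> b = \<nu> u + \<nu> c" using K[of b u] u(1) unfolding c_def by (simp add: inf_absorb2)
    then have cneg: "\<nu> c < 0" using bneg u(2) by linarith
    have cnp: "nonneg_below (\<lambda>x. - \<nu> x) c"
      unfolding nonneg_below_def
    proof (intro allI impI)
      fix d assume d: "d \<le> c"
      show "0 \<le> - \<nu> d"
      proof (rule ccontr)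
        assume "\<not> 0 \<le> - \<nu> d"
        then have pos: "\<nu> d > 0" by simp
        have "d \<le> pneg u" using d unfolding c_def by simp
        then have du: "inf u d = bot" using le_pneg[OF frame] by (simp add: inf_commute)
        have "\<nu> (sup u d) = \<nu> u + \<nu> d" using disj[OF du] .
        moreover have "sup u d \<le> b" using d u(1) unfolding c_def by simp
        ultimately have "sup u d = u" using max[of "sup u d"] u(2) pos by simp
        then have "d \<le> u" by (metis sup.orderI sup_commute)
        then have "d = bot" using du by (simp add: inf_absorb2)
        then show False using pos bot0 by simp
      qed
    qed
    then have "c \<le> neg_part_el \<nu>" unfolding neg_part_el_def by (rule Sup_upper[OF CollectI])
    moreover have "c \<le> pneg (neg_part_el \<nu>)" using b unfolding c_def by (simp add: le_infI1)
    ultimately have "c \<le> inf (neg_part_el \<nu>) (pneg (neg_part_el \<nu>))" by simp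
    then have "c = bot" using inf_pneg_self[OF frame] by (simp add: bot_unique)
    then show False using cneg bot0 by simp
  qed
qed

lemma part_props:
  assumes Q: "nonneg_below \<nu> Q"
  shows "positive_valuation (\<lambda>x. \<nu> (inf Q x)) \<and> normal_valuation (\<lambda>x. \<nu> (inf Q x))"
proof -
  have val: "valuation (\<lambda>x. \<nu> (inf Q x))" unfolding valuation_def
  proof (intro conjI allI)
    show "\<nu> (inf Q bot) = 0" using bot0 by simp
    fix x y
    have "sup (inf Q x) (inf Q y) = inf Q (sup x y)" using frame_dist2[OF frame] by simp
    moreover have "inf (inf Q x) (inf Q y) = inf Q (inf x y)" by (simp add: inf_aci)
    ultimately show "\<nu> (inf Q x) + \<nu> (inf Q y) = \<nu> (inf Q (sup x y)) + \<nu> (inf Q (inf x y))"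
      using modular[of "inf Q x" "inf Q y"] by simp
  qed
  have nn: "\<forall>x. 0 \<le> \<nu> (inf Q x)" using Q unfolding nonneg_below_def by simp
  have mono: "mono (\<lambda>x. \<nu> (inf Q x))"
  proof (rule monoI)
    fix x y :: 'a assume xy: "x \<le> y"
    have "\<nu> (inf Q y) = \<nu> (inf (inf Q y) (inf Q x)) + \<nu> (inf (inf Q y) (pneg (inf Q x)))" by (rule K)
    moreover have "inf (inf Q y) (inf Q x) = inf Q x" using xy by (simp add: inf.absorb2 le_infI2 inf_mono)
    moreover have "0 \<le> \<nu> (inf (inf Q y) (pneg (inf Q x)))" using Q unfolding nonneg_below_def
      by (simp add: le_infI1)
    ultimately show "\<nu> (inf Q x) \<le> \<nu> (inf Q y)" by simp
  qed
  have ct: "net_tendsto (\<lambda>x. \<nu> (inf Q x)) I (\<nu> (inf Q (Sup I)))" if dI: "directed I" for I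
  proof -
    have "net_tendsto \<nu> (inf Q ` I) (\<nu> (Sup (inf Q ` I)))" by (rule cont[OF directed_inf_image[OF dI]])
    moreover have "Sup (inf Q ` I) = inf Q (Sup I)" using frame_dist[OF frame] by simp
    ultimately have T: "net_tendsto \<nu> (inf Q ` I) (\<nu> (inf Q (Sup I)))" by simp
    show ?thesis unfolding net_tendsto_def
    proof (intro allI impI)
      fix e :: real assume "e > 0"
      then obtain x' where "x' \<in> inf Q ` I" and x': "\<forall>y\<in>inf Q ` I. x' \<le> y \<longrightarrow> \<bar>\<nu> y - \<nu> (inf Q (Sup I))\<bar> < e"
        using T unfolding net_tendsto_def by blast
      then obtain x0 where "x0 \<in> I" "x' = inf Q x0" by auto
      show "\<exists>x\<in>I. \<forall>y\<in>I. x \<le> y \<longrightarrow> \<bar>\<nu> (inf Q y) - \<nu> (inf Q (Sup I))\<bar> < e"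
      proof (intro bexI[of _ x0] ballI impI)
        fix y assume "y \<in> I" "x0 \<le> y"
        then show "\<bar>\<nu> (inf Q y) - \<nu> (inf Q (Sup I))\<bar> < e"
          using x' \<open>x' = inf Q x0\<close> by (auto intro: le_infI2)
      qed (rule \<open>x0 \<in> I\<close>)
    qed
  qed
  have nrm: "\<nu> (inf Q (pneg (pneg a))) = \<nu> (inf Q a)" for a
  proof -
    have "\<nu> (inf Q (pneg (pneg a))) = \<nu> (inf (inf Q (pneg (pneg a))) a) + \<nu> (inf (inf Q (pneg (pneg a))) (pneg a))"
      by (rule K)
    moreover have "inf (inf Q (pneg (pneg a))) a = inf Q a"
      using le_pneg_pneg[OF frame, of a] by (simp add: inf_assoc inf.absorb2)
    moreover have "inf (inf Q (pneg (pneg a))) (pneg a) = bot"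
      using pneg_inf[OF frame, of "pneg a"] by (metis inf_assoc inf_bot_right)
    ultimately show ?thesis using bot0 by simp
  qed
  show ?thesis
    unfolding positive_valuation_def normal_valuation_def continuous_valuation_def
    using val nn mono ct nrm by blast
qed

end

lemma neg_pos_eq: "neg_part_el \<nu> = pos_part_el (\<lambda>x. - \<nu> x)"
  unfolding neg_part_el_def pos_part_el_def by simp

lemma neg_neg_fun: "(\<lambda>x. - (- (\<nu>::'a \<Rightarrow> real) x))  = \<nu>"
  by simp

lemma (in hahn) conclusions: "hahn_conclusions \<nu>"
proof -
  interpret N: hahn "\<lambda>x. - \<nu> x" by (rule neg_hahn)
  define P where "P = pos_part_el \<nu>"
  define Ng where "Ng = neg_part_el \<nu>"
  have c1: "\<forall>a. nonneg_below \<nu> a \<longleftrightarrow> a \<le> P" using nonneg_iff P_def by simp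
  have c2: "\<forall>a. nonneg_below (\<lambda>x. - \<nu> x) a \<longleftrightarrow> a \<le> Ng"
    using N.nonneg_iff Ng_def neg_pos_eq by metis
  have "pneg Ng \<le> P" using c1 hahn_pos Ng_def by simp
  moreover have "pneg (pneg Ng) \<le> Ng" using c2 N.nonneg_pneg_pneg by blast
  moreover have "sup (pneg Ng) (pneg (pneg Ng)) = top" using ed unfolding extremally_disconnected_def by blast
  ultimately have c3: "sup P Ng = top" by (metis sup_mono top_unique)
  have c4: "vanish_below \<nu> (inf P Ng)" unfolding vanish_below_def
  proof (intro allI impI)
    fix b assume "b \<le> inf P Ng"
    then have "0 \<le> \<nu> b" "0 \<le> - \<nu> b" using c1 c2 unfolding nonneg_below_def by auto
    then show "\<nu> b = 0" by simp
  qed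
  have c5: "\<forall>a. vanish_below \<nu> a \<longrightarrow> a \<le> inf P Ng"
  proof (intro allI impI)
    fix a assume "vanish_below \<nu> a"
    then have "nonneg_below \<nu> a" "nonneg_below (\<lambda>x. - \<nu> x) a"
      unfolding vanish_below_def nonneg_below_def by auto
    then show "a \<le> inf P Ng" using c1 c2 by simp
  qed
  have pp: "positive_valuation (\<lambda>x. \<nu> (inf P x)) \<and> normal_valuation (\<lambda>x. \<nu> (inf P x))"
    using part_props[OF pos_nonneg] P_def by simp
  have np: "positive_valuation (\<lambda>x. - \<nu> (inf Ng x)) \<and> normal_valuation (\<lambda>x. - \<nu> (inf Ng x))"
    using N.part_props[OF N.pos_nonneg] Ng_def neg_pos_eq by metis
  have c10: "\<forall>x. \<nu> x = \<nu> (inf P x) - (- \<nu> (inf Ng x))"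
  proof
    fix x
    have "\<nu> (inf P x) + \<nu> (inf Ng x) = \<nu> (sup (inf P x) (inf Ng x)) + \<nu> (inf (inf P x) (inf Ng x))"
      by (rule modular)
    moreover have "sup (inf P x) (inf Ng x) = x"
      using frame_dist2[OF frame, of x P Ng] c3 by (simp add: inf_commute)
    moreover have "\<nu> (inf (inf P x) (inf Ng x)) = 0" using c4 unfolding vanish_below_def
      by (simp add: le_infI1 le_infI2)
    ultimately show "\<nu> x = \<nu> (inf P x) - (- \<nu> (inf Ng x))" by simp
  qed
  show ?thesis unfolding hahn_conclusions_def
    using c1 c2 c3 c4 c5 pp np c10 unfolding P_def Ng_def by blast
qed

lemma K_stonean:
  assumes fr: "is_frame TYPE('a::complete_lattice)" and ed: "extremally_disconnected TYPE('a)"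
    and nv: "normal_valuation (\<nu>::'a \<Rightarrow> real)"
  shows "\<nu> c = \<nu> (inf c a) + \<nu> (inf c (pneg a))"
proof -
  have val: "valuation \<nu>" using nv unfolding normal_valuation_def continuous_valuation_def by simp
  have nn: "\<And>x. \<nu> (pneg (pneg x)) = \<nu> x" using nv unfolding normal_valuation_def by simp
  have top: "sup (pneg a) (pneg (pneg a)) = top" using ed unfolding extremally_disconnected_def by blast
  have ceq: "c = sup (inf c (pneg a)) (inf c (pneg (pneg a)))"
    using frame_dist2[OF fr, of c "pneg a" "pneg (pneg a)"] top by simp
  have "inf (inf c (pneg a)) (inf c (pneg (pneg a))) \<le> inf (pneg a) (pneg (pneg a))"
    by (meson inf_le2 inf_mono)
  then have dj: "inf (inf c (pneg a)) (inf c (pneg (pneg a))) = bot"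
    using inf_pneg_self[OF fr, of "pneg a"] by (simp add: bot_unique)
  have "\<nu> (inf c (pneg a)) + \<nu> (inf c (pneg (pneg a)))
     = \<nu> (sup (inf c (pneg a)) (inf c (pneg (pneg a)))) + \<nu> (inf (inf c (pneg a)) (inf c (pneg (pneg a))))"
    using val unfolding valuation_def by blast
  also have "\<dots> = \<nu> c" using ceq[symmetric] dj val unfolding valuation_def by simp
  finally have s1: "\<nu> c = \<nu> (inf c (pneg a)) + \<nu> (inf c (pneg (pneg a)))" by simp
  define m where "m = inf c (pneg (pneg a))"
  define a' where "a' = inf c a"
  have "a' \<le> m" unfolding a'_def m_def using le_pneg_pneg[OF fr, of a] by (simp add: le_infI2)
  have "inf m (pneg a') = bot"
  proof -
    define w where "w = inf m (pneg a')"
    have "inf w a \<le> inf a' (pneg a')" unfolding w_def m_def a'_def by (simp add: le_infI1 le_infI2)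
    then have "inf w a = bot" using inf_pneg_self[OF fr, of a'] by (simp add: bot_unique)
    then have "w \<le> pneg a" using le_pneg[OF fr] by blast
    moreover have "w \<le> pneg (pneg a)" unfolding w_def m_def by (simp add: le_infI1)
    ultimately have "w \<le> inf (pneg a) (pneg (pneg a))" by simp
    then show ?thesis using inf_pneg_self[OF fr, of "pneg a"] unfolding w_def by (simp add: bot_unique)
  qed
  then have "m \<le> pneg (pneg a')" using le_pneg[OF fr] by blast
  have "pneg (pneg a') \<le> pneg (pneg m)"
    using pneg_anti[OF fr, OF pneg_anti[OF fr \<open>a' \<le> m\<close>]] .
  moreover have "pneg (pneg m) \<le> pneg (pneg a')"
    using pneg_anti[OF fr, OF pneg_anti[OF fr \<open>m \<le> pneg (pneg a')\<close>]] pneg3[OF fr, of a'] by simp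
  ultimately have "pneg (pneg m) = pneg (pneg a')" by simp
  then have "\<nu> m = \<nu> a'" using nn[of m] nn[of a'] by simp
  then show ?thesis using s1 unfolding m_def a'_def by simp
qed

lemma K_boolean:
  assumes fr: "boolean_locale TYPE('a::complete_lattice)" and v: "valuation (\<nu>::'a \<Rightarrow> real)"
  shows "\<nu> c = \<nu> (inf c a) + \<nu> (inf c (pneg a))"
proof -
  have f: "is_frame TYPE('a)" using fr unfolding boolean_locale_def by simp
  have "sup a (pneg a) = top" using fr unfolding boolean_locale_def by simp
  then have ceq: "c = sup (inf c a) (inf c (pneg a))" using frame_dist2[OF f, of c a "pneg a"] by simp
  have "inf (inf c a) (inf c (pneg a)) \<le> inf a (pneg a)"
    by (meson inf_le2 inf_mono)
  then have dj: "inf (inf c a) (inf c (pneg a)) = bot"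
    using inf_pneg_self[OF f, of a] by (simp add: bot_unique)
  have "\<nu> (inf c a) + \<nu> (inf c (pneg a))
     = \<nu> (sup (inf c a) (inf c (pneg a))) + \<nu> (inf (inf c a) (inf c (pneg a)))"
    using v unfolding valuation_def by blast
  also have "\<dots> = \<nu> c" using ceq[symmetric] dj v unfolding valuation_def by simp
  finally show ?thesis by simp
qed

theorem mainTheorem17:
  fixes \<nu> :: "'a::complete_lattice \<Rightarrow> real"
  shows "(stonean TYPE('a) \<and> normal_valuation \<nu> \<longrightarrow> hahn_conclusions \<nu>)
       \<and> (boolean_locale TYPE('a) \<and> continuous_valuation \<nu> \<longrightarrow> hahn_conclusions \<nu>)"
proof (intro conjI impI)
  assume a: "stonean TYPE('a) \<and> normal_valuation \<nu>"
  then have fr: "is_frame TYPE('a)" and ed: "extremally_disconnected TYPE('a)"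
    and nv: "normal_valuation \<nu>" unfolding stonean_def by auto
  interpret hahn \<nu>
  proof
    show "continuous_valuation \<nu>" using nv unfolding normal_valuation_def by simp
  qed (use fr ed K_stonean[OF fr ed nv] in auto)
  show "hahn_conclusions \<nu>" by (rule conclusions)
next
  assume a: "boolean_locale TYPE('a) \<and> continuous_valuation \<nu>"
  then have fr: "is_frame TYPE('a)" and bl: "boolean_locale TYPE('a)"
    and cv: "continuous_valuation \<nu>" unfolding boolean_locale_def by auto
  have ed: "extremally_disconnected TYPE('a)" unfolding extremally_disconnected_def
    using bl unfolding boolean_locale_def by blast
  have v: "valuation \<nu>" using cv unfolding continuous_valuation_def by simp
  interpret hahn \<nu>
    by standard (use fr ed cv K_boolean[OF bl v] in auto)
  show "hahn_conclusions \<nu>" by (rule conclusions)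
qed

end
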